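(* For probability measures $\mu$ on $\mathbb R$ with finite first moment set $a(x,\mu)=x\,I_{\{x\ge0\}}$ (the indicator function of $\{x\ge0\}$ times $x$), $b(x,\mu)=\int_{\mathbb R}(2y-x)\,\mu(dy)$, and $L_\mu u=a(x,\mu)u''+b(x,\mu)u'$. (a) For every compactly supported probability measure $\mu$, with $W(x,\mu)=\frac12\int_{\mathbb R}(x-2y)^2\,\mu(dy)$, one has $$\int_{\mathbb R}L_\mu W(x,\mu)\,\mu(dx)\le\frac12-\frac12\int_{\mathbb R}x^2\,\mu(dx),$$ where $L_\mu$ acts on $x\mapsto W(x,\mu)$. (b) There is no function $V\in C^2(\mathbb R)$ with $V\ge0$ and $V(x)\to+\infty$ as $|x|\to\infty$, together with positive numbers $C,\Lambda$, such that $\int_{\mathbb R}L_\mu V\,d\mu\le C-\Lambda\int_{\mathbb R}V\,d\mu$ for every compactly supported probability measure $\mu$ on $\mathbb R$. *)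

theory Defs
  imports "HOL-Probability.Probability"
begin

definition prob_on_real :: "real measure \<Rightarrow> bool" where
  "prob_on_real \<mu> \<longleftrightarrow> prob_space \<mu> \<and> sets \<mu> = sets borel"

definition compactly_supported :: "real measure \<Rightarrow> bool" where
  "compactly_supported \<mu> \<longleftrightarrow> (\<exists>K. compact K \<and> (AE x in \<mu>. x \<in> K))"

definition a_coef :: "real \<Rightarrow> real measure \<Rightarrow> real" where
  "a_coef x \<mu> = x * indicator {0..} x"

definition b_coef :: "real \<Rightarrow> real measure \<Rightarrow> real" where
  "b_coef x \<mu> = (\<integral>y. (2 * y - x) \<partial>\<mu>)"

definition L_op :: "real measure \<Rightarrow> (real \<Rightarrow> real) \<Rightarrow> real \<Rightarrow> real" where
  "L_op \<mu> u x = a_coef x \<mu> * deriv (deriv u) x + b_coef x \<mu> * deriv u x"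

definition W_fun :: "real \<Rightarrow> real measure \<Rightarrow> real" where
  "W_fun x \<mu> = 1/2 * (\<integral>y. (x - 2 * y)^2 \<partial>\<mu>)"

definition C2_real :: "(real \<Rightarrow> real) \<Rightarrow> bool" where
  "C2_real V \<longleftrightarrow> (\<forall>x. V differentiable at x) \<and> (\<forall>x. deriv V differentiable at x)
     \<and> continuous_on UNIV (deriv (deriv V))"

end

theory Submission
  imports Defs
begin

lemma partA:
  assumes pr: "prob_on_real \<mu>" and cs: "compactly_supported \<mu>"
  shows "(\<integral>x. L_op \<mu> (\<lambda>z. W_fun z \<mu>) x \<partial>\<mu>) \<le> 1/2 - 1/2 * (\<integral>x. x^2 \<partial>\<mu>)"
proof -
  interpret prob_space \<mu> using pr unfolding prob_on_real_def by simp
  have sets: "sets \<mu> = sets borel" using pr unfolding prob_on_real_def by simp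
  have mb: "f \<in> borel_measurable \<mu>" if "f \<in> borel_measurable borel" for f :: "real \<Rightarrow> real"
    using that measurable_cong_sets[OF sets refl, of borel] by blast
  obtain K where K: "compact K" "AE x in \<mu>. x \<in> K" using cs unfolding compactly_supported_def by blast
  obtain B where B: "\<And>x. x \<in> K \<Longrightarrow> \<bar>x\<bar> \<le> B"
    using compact_imp_bounded[OF K(1)] by (auto simp: bounded_iff)
  have AEB: "AE x in \<mu>. \<bar>x\<bar> \<le> B" using K(2) B by auto
  have i1: "integrable \<mu> (\<lambda>x. x)"
    by (rule integrable_const_bound[where B=B]) (use AEB in simp, rule mb, measurable)
  have i2: "integrable \<mu> (\<lambda>x. x^2)"
  proof (rule integrable_const_bound[where B="B^2"])
    show "AE x in \<mu>. norm (x^2) \<le> B^2" using AEB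
    proof eventually_elim
      case (elim x)
      have "\<bar>x\<bar>^2 \<le> B^2" using elim by (intro power_mono) auto
      then show ?case by simp
    qed
  qed (rule mb, measurable)
  define m where "m = (\<integral>y. y \<partial>\<mu>)"
  define m2 where "m2 = (\<integral>y. y^2 \<partial>\<mu>)"
  have W: "W_fun z \<mu> = 1/2 * (z^2 - 4*z*m + 4*m2)" for z
  proof -
    have "(\<lambda>y. (z - 2*y)^2) = (\<lambda>y. z^2 - (4*z) * y + 4 * y^2)" by (auto simp: power2_eq_square algebra_simps)
    then show ?thesis unfolding W_fun_def m_def m2_def using i1 i2 by (simp add: prob_space)
  qed
  have b: "b_coef x \<mu> = 2*m - x" for x
    unfolding b_coef_def m_def using i1 by (simp add: prob_space)
  have d1: "deriv (\<lambda>z. W_fun z \<mu>) = (\<lambda>z. z - 2*m)"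
  proof
    fix z
    show "deriv (\<lambda>z. W_fun z \<mu>) z = z - 2*m" unfolding W
      by (rule DERIV_imp_deriv) (auto intro!: derivative_eq_intros simp: algebra_simps)
  qed
  have d2: "deriv (deriv (\<lambda>z. W_fun z \<mu>)) = (\<lambda>z. 1)"
  proof
    fix z
    show "deriv (deriv (\<lambda>z. W_fun z \<mu>)) z = 1" unfolding d1
      by (rule DERIV_imp_deriv) (auto intro!: derivative_eq_intros)
  qed
  have L: "L_op \<mu> (\<lambda>z. W_fun z \<mu>) = (\<lambda>x. x * indicator {0..} x + (2*m - x) * (x - 2*m))"
    unfolding L_op_def[abs_def] a_coef_def b d1 d2 by simp
  have iL: "integrable \<mu> (\<lambda>x. x * indicator {0..} x + (2*m - x) * (x - 2*m))"
  proof (rule integrable_const_bound[where B="B + (B + 2*\<bar>m\<bar>)^2"])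
    show "AE x in \<mu>. norm (x * indicator {0..} x + (2*m - x) * (x - 2*m)) \<le> B + (B + 2*\<bar>m\<bar>)^2"
      using AEB
    proof eventually_elim
      case (elim x)
      have "\<bar>x * indicator {0..} x\<bar> \<le> B" using elim by (auto simp: indicator_def)
      moreover have "\<bar>(2*m - x) * (x - 2*m)\<bar> = (x - 2*m)^2" by (simp add: abs_mult abs_minus_commute flip: power2_eq_square)
      moreover have "(x - 2*m)^2 \<le> (B + 2*\<bar>m\<bar>)^2"
      proof -
        have "\<bar>x - 2*m\<bar> \<le> B + 2*\<bar>m\<bar>" using elim by linarith
        hence "\<bar>x - 2*m\<bar>^2 \<le> (B + 2*\<bar>m\<bar>)^2" by (intro power_mono) auto
        thus ?thesis by simp
      qed
      ultimately show ?case by simp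
    qed
  qed (rule mb, measurable)
  have ptw: "x * indicator {0..} x + (2*m - x) * (x - 2*m) \<le> 1/2 + 1/2 * x^2 - (x^2 - 4*m*x + 4*m^2)" for x :: real
  proof -
    have "x * indicator {0..} x \<le> 1/2 + 1/2 * x^2"
      using sum_squares_ge_zero[of "x - 1" 0] by (auto simp: indicator_def power2_eq_square algebra_simps)
    thus ?thesis by (simp add: power2_eq_square algebra_simps)
  qed
  have "(\<integral>x. L_op \<mu> (\<lambda>z. W_fun z \<mu>) x \<partial>\<mu>) \<le> (\<integral>x. 1/2 + 1/2 * x^2 - (x^2 - 4*m*x + 4*m^2) \<partial>\<mu>)"
    unfolding L using iL i1 i2 ptw by (intro integral_mono) auto
  also have "\<dots> = 1/2 + 1/2 * m2 - (m2 - 4*m*m + 4*m^2)"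
    using i1 i2 unfolding m_def m2_def by (simp add: prob_space)
  also have "\<dots> = 1/2 - 1/2 * m2" by (simp add: power2_eq_square)
  finally show ?thesis unfolding m2_def .
qed

lemma partB:
  assumes C2: "C2_real V" and lim: "filterlim V at_top at_infinity" and Lp: "\<Lambda> > 0"
  and H: "\<forall>\<mu>. prob_on_real \<mu> \<and> compactly_supported \<mu> \<longrightarrow>
               (\<integral>x. L_op \<mu> V x \<partial>\<mu>) \<le> C - \<Lambda> * (\<integral>x. V x \<partial>\<mu>)"
  shows False
proof -
  have big: "\<exists>R. \<forall>x. R \<le> \<bar>x\<bar> \<longrightarrow> B \<le> V x" for B
  proof -
    have "\<forall>\<^sub>F x in at_infinity. B \<le> V x" using lim by (simp add: filterlim_at_top)
    then show ?thesis by (auto simp: eventually_at_infinity)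
  qed
  have dV: "(V has_real_derivative deriv V x) (at x)" for x
    using C2 unfolding C2_real_def by (simp add: DERIV_deriv_iff_real_differentiable)
  have contV: "continuous_on UNIV V"
    using dV by (meson DERIV_isCont continuous_at_imp_continuous_on)
  have contdV: "continuous_on UNIV (deriv V)"
    using C2 unfolding C2_real_def
    by (meson DERIV_deriv_iff_real_differentiable DERIV_isCont continuous_at_imp_continuous_on)
  have contddV: "continuous_on UNIV (deriv (deriv V))" using C2 unfolding C2_real_def by simp
  have dirac: "m * deriv V m \<le> C - \<Lambda> * V m" if "m \<le> 0" for m
  proof -
    let ?M = "return borel m"
    have ps: "prob_space ?M" by (simp add: prob_space_return)
    have pr: "prob_on_real ?M" unfolding prob_on_real_def using ps by simp
    have cs: "compactly_supported ?M" unfolding compactly_supported_def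
      by (intro exI[of _ "{m}"]) (simp add: AE_return)
    have b: "b_coef x ?M = 2*m - x" for x
      unfolding b_coef_def by (subst integral_return) auto
    have L: "L_op ?M V = (\<lambda>x. x * indicator {0..} x * deriv (deriv V) x + (2*m - x) * deriv V x)"
      unfolding L_op_def a_coef_def b by simp
    have meas1: "deriv V \<in> borel_measurable borel" using contdV by (rule borel_measurable_continuous_onI)
    have meas2: "deriv (deriv V) \<in> borel_measurable borel" using contddV by (rule borel_measurable_continuous_onI)
    have measV: "V \<in> borel_measurable borel" using contV by (rule borel_measurable_continuous_onI)
    have "(\<integral>x. L_op ?M V x \<partial>?M) = m * indicator {0..} m * deriv (deriv V) m + (2*m - m) * deriv V m"
      unfolding L using meas1 meas2 by (subst integral_return) auto
    moreover have "(\<integral>x. V x \<partial>?M) = V m" using measV by (subst integral_return) auto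
    ultimately have "m * indicator {0..} m * deriv (deriv V) m + m * deriv V m \<le> C - \<Lambda> * V m"
      using H pr cs by force
    moreover have "m * indicator {0..} m * deriv (deriv V) m = 0" using that
      by (cases "m = 0") (auto simp: indicator_def)
    ultimately show ?thesis by simp
  qed
  obtain R1 where R1: "\<And>x. R1 \<le> \<bar>x\<bar> \<Longrightarrow> C/\<Lambda> + 1 \<le> V x" using big by blast
  define x1 where "x1 = - max R1 1"
  have x1neg: "x1 < 0" and Vx1: "C/\<Lambda> + 1 \<le> V x1" unfolding x1_def by (auto intro!: R1)
  obtain R2 where R2: "\<And>x. R2 \<le> \<bar>x\<bar> \<Longrightarrow> V x1 + 1 \<le> V x" using big by blast
  define x2 where "x2 = min (x1 - 1) (- \<bar>R2\<bar>)"
  have x2x1: "x2 < x1" and Vx2: "V x1 + 1 \<le> V x2" unfolding x2_def using x1neg by (auto intro!: R2)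
  obtain m where mS: "m \<in> {x2..x1}" and mmax: "\<And>y. y \<in> {x2..x1} \<Longrightarrow> V y \<le> V m"
    using continuous_attains_sup[of "{x2..x1}" V] x2x1 continuous_on_subset[OF contV]
    by (metis atLeastAtMost_iff compact_Icc empty_iff order.refl less_imp_le subset_UNIV)
  have "V x2 \<le> V m" using mmax x2x1 by simp
  hence Vm: "V x1 + 1 \<le> V m" using Vx2 by simp
  have mx1: "m < x1" using mS Vm by (cases "m = x1") auto
  have "C/\<Lambda> < V m" using Vm Vx1 by simp
  hence "C < \<Lambda> * V m" using Lp by (simp add: field_simps)
  hence "m * deriv V m < 0" using dirac[of m] mx1 x1neg by simp
  hence pos: "0 < deriv V m" using mx1 x1neg by (simp add: mult_less_0_iff)
  obtain d where d: "d > 0" "\<And>h. h > 0 \<Longrightarrow> h < d \<Longrightarrow> V m < V (m + h)"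
    using DERIV_pos_inc_right[OF dV pos] by blast
  define h where "h = min (d/2) (x1 - m)"
  have "h > 0" "h < d" using d mx1 unfolding h_def by auto
  hence "V m < V (m + h)" using d by blast
  moreover have "m + h \<in> {x2..x1}" using mS \<open>h > 0\<close> unfolding h_def by auto
  ultimately show False using mmax by fastforce
qed


theorem mainTheorem12:
  shows "(\<forall>\<mu>. prob_on_real \<mu> \<and> compactly_supported \<mu> \<longrightarrow>
            (\<integral>x. L_op \<mu> (\<lambda>z. W_fun z \<mu>) x \<partial>\<mu>) \<le> 1/2 - 1/2 * (\<integral>x. x^2 \<partial>\<mu>))
     \<and> \<not> (\<exists>(V::real \<Rightarrow> real) (C::real) (\<Lambda>::real).
            C2_real V \<and> (\<forall>x. V x \<ge> 0) \<and> filterlim V at_top at_infinity \<and> C > 0 \<and> \<Lambda> > 0 \<and>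
            (\<forall>\<mu>. prob_on_real \<mu> \<and> compactly_supported \<mu> \<longrightarrow>
               (\<integral>x. L_op \<mu> V x \<partial>\<mu>) \<le> C - \<Lambda> * (\<integral>x. V x \<partial>\<mu>)))"
proof (intro conjI allI impI notI)
  fix \<mu> assume "prob_on_real \<mu> \<and> compactly_supported \<mu>"
  then show "(\<integral>x. L_op \<mu> (\<lambda>z. W_fun z \<mu>) x \<partial>\<mu>) \<le> 1/2 - 1/2 * (\<integral>x. x^2 \<partial>\<mu>)"
    using partA by blast
next
  assume "\<exists>(V::real \<Rightarrow> real) (C::real) (\<Lambda>::real).
            C2_real V \<and> (\<forall>x. V x \<ge> 0) \<and> filterlim V at_top at_infinity \<and> C > 0 \<and> \<Lambda> > 0 \<and>
            (\<forall>\<mu>. prob_on_real \<mu> \<and> compactly_supported \<mu> \<longrightarrow>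
               (\<integral>x. L_op \<mu> V x \<partial>\<mu>) \<le> C - \<Lambda> * (\<integral>x. V x \<partial>\<mu>))"
  then show False using partB by blast
qed

end
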